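(* Let $r\ge1$, $\mathbf{m}\in\mathbb{N}^r$, $m=m_1+\cdots+m_r$, $\mathbf{f}\in\mathbb{C}^r$, $b,c\in\mathbb{C}$ with $(c-b-m)_m\ne0$. Define $$ P_m(x)=\frac{1}{(c-b-m)_m}\sum_{k=0}^m(b)_{k}(1-c+b)_{k}D_{k}(c-b-m-x)_{m-k},\qquad D_k=\frac{(-1)^k(\mathbf{f}-b)_{\mathbf{m}}}{k!}{}_{r+1}F_{r}\!\left(\begin{matrix}-k,1-\mathbf{f}+b\\1-\mathbf{f}+b-\mathbf{m}\end{matrix}\right), $$ and $$ Q(b,c,\mathbf{f},\mathbf{m};t)=\frac{1}{(c-b-m)_{m}}\sum_{k=0}^{m}(b)_k\,C_{k,r}\,(t)_{k}\,(c-b-m-t)_{m-k},\qquad C_{k,r}=\frac{(-1)^k}{k!}{}_{r+1}F_{r}\!\left(\begin{matrix}-k,\mathbf{f}+\mathbf{m}\\\mathbf{f}\end{matrix}\right). $$ Then $P_m(x)=(\mathbf{f})_{\mathbf{m}}\,Q(b,c,\mathbf{f},\mathbf{m};x)$ identically in $x$.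
   Context: $(a)_k=\Gamma(a+k)/\Gamma(a)$. For vectors: $(\mathbf{f})_{\mathbf{m}}=\prod_i(f_i)_{m_i}$, $\mathbf{f}+\alpha$, $\mathbf{f}+\mathbf{m}$ componentwise; a vector among hypergeometric parameters means its components are listed. ${}_pF_q(\mathbf{a};\mathbf{b})$ denotes the (terminating) generalized hypergeometric series evaluated at $1$. Parameters are assumed such that all expressions are defined. *)

theory Defs
  imports "HOL-Analysis.Analysis"
begin

definition poch_vec :: "complex list \<Rightarrow> nat list \<Rightarrow> complex" where
  "poch_vec fs ms = prod_list (map2 (\<lambda>a n. pochhammer a n) fs ms)"

text \<open>Terminating hypergeometric series at 1 with first numerator parameter -k:
  F(-k, as; bs) = sum_{n=0}^k (-k)_n prod (a)_n / (prod (b)_n n!).  Since (-k)_n = 0 for n > k,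
  this is the full series.\<close>
definition hypF_term :: "nat \<Rightarrow> complex list \<Rightarrow> complex list \<Rightarrow> complex" where
  "hypF_term k as bs = (\<Sum>n\<le>k. pochhammer (- of_nat k) n * prod_list (map (\<lambda>a. pochhammer a n) as)
      / (prod_list (map (\<lambda>a. pochhammer a n) bs) * fact n))"

definition D_coef :: "complex \<Rightarrow> complex list \<Rightarrow> nat list \<Rightarrow> nat \<Rightarrow> complex" where
  "D_coef b fs ms k = (-1)^k * poch_vec (map (\<lambda>fi. fi - b) fs) ms / fact k
     * hypF_term k (map (\<lambda>fi. 1 - fi + b) fs) (map2 (\<lambda>fi mi. 1 - fi + b - of_nat mi) fs ms)"

definition P_poly :: "complex \<Rightarrow> complex \<Rightarrow> complex list \<Rightarrow> nat list \<Rightarrow> complex \<Rightarrow> complex" where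
  "P_poly b c fs ms x = (let m = sum_list ms in
     1 / pochhammer (c - b - of_nat m) m *
     (\<Sum>k\<le>m. pochhammer b k * pochhammer (1 - c + b) k * D_coef b fs ms k
               * pochhammer (c - b - of_nat m - x) (m - k)))"

definition C_coef :: "complex list \<Rightarrow> nat list \<Rightarrow> nat \<Rightarrow> complex" where
  "C_coef fs ms k = (-1)^k / fact k * hypF_term k (map2 (\<lambda>fi mi. fi + of_nat mi) fs ms) fs"

definition Q_poly :: "complex \<Rightarrow> complex \<Rightarrow> complex list \<Rightarrow> nat list \<Rightarrow> complex \<Rightarrow> complex" where
  "Q_poly b c fs ms t = (let m = sum_list ms in
     1 / pochhammer (c - b - of_nat m) m *
     (\<Sum>k\<le>m. pochhammer b k * C_coef fs ms k * pochhammer t k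
               * pochhammer (c - b - of_nat m - t) (m - k)))"

end

theory Submission imports Defs "HOL-Computational_Algebra.Formal_Power_Series" begin

definition dif :: "(complex \<Rightarrow> complex) \<Rightarrow> complex \<Rightarrow> complex" where
  "dif P y = P (y + 1) - P y"

lemma dif_Suc: "(dif ^^ Suc k) P y = (dif ^^ k) P (y + 1) - (dif ^^ k) P y"
  by (simp add: dif_def)

lemma lemA: "(dif ^^ k) P y = (\<Sum>n\<le>k. (-1)^(k+n) * of_nat (k choose n) * P (y + of_nat n))"
proof (induction k arbitrary: y)
  case 0
  then show ?case by simp
next
  case (Suc k)
  define s where "s = (\<lambda>n::nat. (-1::complex)^n)"
  have s2: "s (Suc (Suc n)) = s n" for n by (simp add: s_def)
  have s1: "s (Suc n) = - s n" for n by (simp add: s_def)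
  have A: "(\<Sum>n\<le>k. s (k+n) * of_nat (k choose n) * P (y + of_nat n))
      = - s (k+1) * P y - (\<Sum>n\<le>k. s (k+n) * of_nat (k choose Suc n) * P (y + of_nat (Suc n)))"
  proof -
    have "(\<Sum>n\<le>k. s (k+n) * of_nat (k choose n) * P (y + of_nat n))
        = (\<Sum>n\<le>Suc k. s (k+n) * of_nat (k choose n) * P (y + of_nat n))"
      by (simp add: sum.atMost_Suc)
    also have "\<dots> = s k * P y + (\<Sum>n\<le>k. s (k+Suc n) * of_nat (k choose Suc n) * P (y + of_nat (Suc n)))"
      by (subst sum.atMost_Suc_shift) simp
    finally show ?thesis by (simp add: s1 sum_negf)
  qed
  have "(dif ^^ Suc k) P y = (\<Sum>n\<le>k. s (k+n) * of_nat (k choose n) * P (y + 1 + of_nat n))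
      - (\<Sum>n\<le>k. s (k+n) * of_nat (k choose n) * P (y + of_nat n))"
    unfolding dif_Suc Suc s_def by simp
  also have "\<dots> = s (k+1) * P y + (\<Sum>n\<le>k. s (k+n) * of_nat (k choose n) * P (y + of_nat (Suc n)))
      + (\<Sum>n\<le>k. s (k+n) * of_nat (k choose Suc n) * P (y + of_nat (Suc n)))"
    unfolding A by (simp add: add.assoc add.commute[of 1])
  also have "\<dots> = (\<Sum>n\<le>Suc k. s (Suc k+n) * of_nat (Suc k choose n) * P (y + of_nat n))"
    by (subst sum.atMost_Suc_shift) (simp add: s2 sum.distrib algebra_simps)
  finally show ?case by (simp add: s_def)
qed

lemma dif_sum: "(dif ^^ k) (\<lambda>y. \<Sum>j\<in>J. g j * Q j y) y = (\<Sum>j\<in>J. g j * (dif ^^ k) (Q j) y)"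
  unfolding lemA by (simp add: sum_distrib_left sum.swap[of _ J] mult.left_commute)

lemma rise_diff: "pochhammer (z+1) (Suc i) - pochhammer z (Suc i) = of_nat (Suc i) * pochhammer (z+1::complex) i"
  by (simp only: pochhammer_Suc[of "z+1"] pochhammer_rec[of z]) (simp add: algebra_simps)

lemma dif_rise: "(dif ^^ k) (\<lambda>y. pochhammer (a + y) j) y =
   (if k \<le> j then fact j / fact (j-k) * pochhammer (a + y + of_nat k) (j-k) else 0)"
proof (induction k arbitrary: y)
  case 0
  then show ?case by simp
next
  case (Suc k)
  show ?case
  proof (cases "Suc k \<le> j")
    case True
    then obtain i where i: "j - k = Suc i" "j - Suc k = i" by (metis Suc_diff_Suc Suc_le_lessD)
    have "(dif ^^ Suc k) (\<lambda>y. pochhammer (a + y) j) y =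
       fact j / fact (j-k) * (pochhammer (a + y + of_nat k + 1) (Suc i) - pochhammer (a + y + of_nat k) (Suc i))"
      unfolding dif_Suc Suc using True i by (simp add: algebra_simps)
    also have "\<dots> = fact j / fact (j-k) * (of_nat (Suc i) * pochhammer (a + y + of_nat k + 1) i)"
      by (simp only: rise_diff)
    also have "\<dots> = fact j / fact i * pochhammer (a + y + of_nat (Suc k)) i"
    proof -
      have f: "fact (j-k) = of_nat (Suc i) * (fact i :: complex)" using i by simp
      have nz: "of_nat (Suc i) \<noteq> (0::complex)" by (simp del: of_nat_Suc)
      show ?thesis unfolding f using nz by (simp add: field_simps add.assoc del: of_nat_Suc) (simp add: algebra_simps)
    qed
    finally show ?thesis using True i by simp
  next
    case False
    then show ?thesis
      unfolding dif_Suc Suc by (cases "k = j") auto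
  qed
qed

definition ff :: "nat \<Rightarrow> complex \<Rightarrow> complex" where
  "ff j y = pochhammer (y - of_nat j + 1) j"

lemma ff_0[simp]: "ff 0 y = 1" by (simp add: ff_def)

lemma ff_Suc: "ff (Suc j) y = (y - of_nat j) * ff j y"
  unfolding ff_def by (subst pochhammer_rec) (simp add: algebra_simps)

definition inspan :: "nat \<Rightarrow> (complex \<Rightarrow> complex) \<Rightarrow> bool" where
  "inspan N G = (\<exists>g. \<forall>y. G y = (\<Sum>j\<le>N. g j * ff j y))"

lemma inspan_ff: "i \<le> N \<Longrightarrow> inspan N (ff i)"
  unfolding inspan_def
proof (rule exI[of _ "\<lambda>l. if l = i then 1 else 0"], intro allI impI)
  fix y assume "i \<le> N"
  have "(\<Sum>j\<le>N. (if j = i then 1 else 0) * ff j y) = (\<Sum>j\<le>N. if j = i then ff j y else 0)"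
    by (rule sum.cong) auto
  also have "\<dots> = ff i y" using \<open>i \<le> N\<close> by (simp add: sum.delta)
  finally show "ff i y = (\<Sum>j\<le>N. (if j = i then 1 else 0) * ff j y)" by simp
qed

lemma inspan_add: "inspan N F \<Longrightarrow> inspan N G \<Longrightarrow> inspan N (\<lambda>y. F y + G y)"
  unfolding inspan_def
proof (elim exE)
  fix f g assume f: "\<forall>y. F y = (\<Sum>j\<le>N. f j * ff j y)" and g: "\<forall>y. G y = (\<Sum>j\<le>N. g j * ff j y)"
  show "\<exists>h. \<forall>y. F y + G y = (\<Sum>j\<le>N. h j * ff j y)"
    by (rule exI[of _ "\<lambda>j. f j + g j"]) (simp add: f g sum.distrib algebra_simps)
qed

lemma inspan_scale: "inspan N F \<Longrightarrow> inspan N (\<lambda>y. c * F y)"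
  unfolding inspan_def
proof (elim exE)
  fix f assume f: "\<forall>y. F y = (\<Sum>j\<le>N. f j * ff j y)"
  show "\<exists>h. \<forall>y. c * F y = (\<Sum>j\<le>N. h j * ff j y)"
    by (rule exI[of _ "\<lambda>j. c * f j"]) (simp add: f sum_distrib_left algebra_simps)
qed

lemma inspan_zero: "inspan N (\<lambda>y. 0)"
  unfolding inspan_def by (rule exI[of _ "\<lambda>j. 0"]) simp

lemma inspan_sum: "finite J \<Longrightarrow> (\<And>j. j \<in> J \<Longrightarrow> inspan N (F j)) \<Longrightarrow> inspan N (\<lambda>y. \<Sum>j\<in>J. F j y)"
proof (induction J rule: finite_induct)
  case empty
  then show ?case by (simp add: inspan_zero)
next
  case (insert x F)
  then show ?case by (simp add: inspan_add)
qed

lemma inspan_ff_mult: "j \<le> N \<Longrightarrow> inspan (Suc N) (\<lambda>y. (y + a) * ff j y)"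
proof -
  assume j: "j \<le> N"
  have e: "(y + a) * ff j y = ff (Suc j) y + (a + of_nat j) * ff j y" for y
    by (simp add: ff_Suc algebra_simps)
  show ?thesis unfolding e
    using j by (intro inspan_add inspan_scale inspan_ff) auto
qed

lemma inspan_mult: "inspan N G \<Longrightarrow> inspan (Suc N) (\<lambda>y. (y + a) * G y)"
  unfolding inspan_def[of N]
proof (elim exE)
  fix g assume g: "\<forall>y. G y = (\<Sum>j\<le>N. g j * ff j y)"
  have e: "(y + a) * G y = (\<Sum>j\<le>N. g j * ((y + a) * ff j y))" for y
    by (simp add: g sum_distrib_left algebra_simps)
  show "inspan (Suc N) (\<lambda>y. (y + a) * G y)"
    unfolding e by (intro inspan_sum inspan_scale inspan_ff_mult) auto
qed

lemma inspan_poch: "inspan N G \<Longrightarrow> inspan (N + n) (\<lambda>y. G y * pochhammer (a + y) n)"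
proof (induction n)
  case 0
  then show ?case by simp
next
  case (Suc n)
  have e: "G y * pochhammer (a + y) (Suc n) = (y + (a + of_nat n)) * (G y * pochhammer (a + y) n)" for y
    by (simp add: pochhammer_Suc algebra_simps)
  show ?case unfolding e using inspan_mult[OF Suc.IH[OF Suc.prems]] by simp
qed

lemma inspan_G: "length fs = length ms \<Longrightarrow> inspan (sum_list ms) (\<lambda>y. poch_vec (map (\<lambda>f. f + y) fs) ms)"
proof (induction fs ms rule: list_induct2)
  case Nil
  have "inspan 0 (ff 0)" by (rule inspan_ff) simp
  then show ?case by (simp add: poch_vec_def ff_0[abs_def])
next
  case (Cons f fs m ms)
  have e: "poch_vec (map (\<lambda>f. f + y) (f # fs)) (m # ms) = poch_vec (map (\<lambda>f. f + y) fs) ms * pochhammer (f + y) m" for y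
    by (simp add: poch_vec_def)
  show ?case unfolding e using inspan_poch[OF Cons.IH, of m f] by (simp add: add.commute)
qed

lemma dif_ff0: "(dif ^^ k) (ff j) 0 = (if j = k then fact k else 0)"
proof -
  have e: "ff j = (\<lambda>y. pochhammer ((1 - of_nat j) + y) j)"
    by (rule ext) (simp add: ff_def algebra_simps)
  have z: "pochhammer (1 - of_nat j + of_nat k) (j - k) = (0::complex)" if "k < j"
  proof -
    have "1 - of_nat j + of_nat k = - (of_nat (j - k - 1) :: complex)"
      using that by (simp add: of_nat_diff)
    moreover have "j - k - 1 < j - k" using that by simp
    ultimately show ?thesis unfolding pochhammer_eq_0_iff by blast
  qed
  show ?thesis unfolding e dif_rise using z by auto
qed

lemma ff_neg: "ff j (- b - y) = (-1)^j * pochhammer (b + y) j"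
  unfolding ff_def using pochhammer_minus'[of "-b-y" j] by (simp add: algebra_simps)

lemma coefC:
  assumes "\<forall>y. G y = (\<Sum>j\<le>N. g j * ff j y)" "k \<le> N"
  shows "(dif ^^ k) G 0 = fact k * g k"
proof -
  have "G = (\<lambda>y. \<Sum>j\<le>N. g j * ff j y)" using assms(1) by auto
  then have "(dif ^^ k) G 0 = (\<Sum>j\<le>N. g j * (dif ^^ k) (ff j) 0)" by (simp add: dif_sum)
  also have "\<dots> = (\<Sum>j\<le>N. if j = k then g k * fact k else 0)"
    by (rule sum.cong) (auto simp: dif_ff0)
  also have "\<dots> = fact k * g k" using assms(2) by (simp add: sum.delta mult.commute)
  finally show ?thesis .
qed

lemma coefD:
  assumes "\<forall>y. G y = (\<Sum>j\<le>N. g j * ff j y)"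
  shows "(dif ^^ k) (\<lambda>y. G (- b - y)) 0 = (\<Sum>j\<le>N. g j * (-1)^j *
     (if k \<le> j then fact j / fact (j-k) * pochhammer (b + of_nat k) (j-k) else 0))"
proof -
  have "(\<lambda>y. G (- b - y)) = (\<lambda>y. \<Sum>j\<le>N. (g j * (-1)^j) * pochhammer (b + y) j)"
    using assms(1) by (auto simp: ff_neg mult.assoc)
  then show ?thesis by (simp add: dif_sum dif_rise cong: if_cong)
qed

lemma negpoch: "pochhammer (- of_nat k :: complex) n = (-1)^n * fact n * of_nat (k choose n)"
proof -
  have "fact n * of_nat (k choose n) = (-1)^n * pochhammer (- of_nat k :: complex) n"
    using gbinomial_pochhammer[of "of_nat k :: complex" n] binomial_gbinomial[of k n, where 'a=complex]
    by (simp add: field_simps)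
  then have "(-1)^n * (fact n * of_nat (k choose n)) = ((-1)^n * (-1)^n) * pochhammer (- of_nat k :: complex) n"
    by (simp add: mult.assoc)
  also have "((-1::complex)^n * (-1)^n) = 1" by (simp add: power_mult_distrib[symmetric])
  finally show ?thesis by (simp add: mult.assoc)
qed

lemma elemD: "pochhammer ((f::complex) - b) m * pochhammer (1 - f + b) n
   = pochhammer (1 - f + b - of_nat m) n * pochhammer (f + (- b - of_nat n)) (m::nat)"
proof -
  define a where "a = 1 - f + b - of_nat m"
  have 1: "pochhammer a (m + n) = pochhammer a m * pochhammer (1 - f + b) n"
    using pochhammer_product'[of a m n] by (simp add: a_def)
  have 2: "pochhammer a (n + m) = pochhammer a n * pochhammer (a + of_nat n) m"
    using pochhammer_product'[of a n m] by simp
  have 3: "pochhammer a m = (-1)^m * pochhammer (f - b) m"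
    using pochhammer_minus'[of "b - f" m] by (simp add: a_def algebra_simps)
  have 4: "pochhammer (a + of_nat n) m = (-1)^m * pochhammer (f + (- b - of_nat n)) m"
    using pochhammer_minus'[of "b - f + of_nat n" m] by (simp add: a_def algebra_simps)
  have "(-1)^m * (pochhammer (f - b) m * pochhammer (1 - f + b) n)
      = (-1)^m * (pochhammer a n * pochhammer (f + (- b - of_nat n)) m)"
    using 1 2 3 4 by (simp add: add.commute mult_ac)
  then show ?thesis by (simp add: a_def)
qed

lemma vandR: "(\<Sum>k\<le>j. of_nat (j choose k) * pochhammer u k * pochhammer v (j-k)) = pochhammer (u+v::complex) j"
proof -
  have V: "(\<Sum>k=0..j. ((-u) gchoose k) * ((-v) gchoose (j - k))) = (-u + -v) gchoose j"
    by (rule gbinomial_Vandermonde)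
  have t: "((-u) gchoose k) * ((-v) gchoose (j - k)) = (-1)^j / fact j * (of_nat (j choose k) * pochhammer u k * pochhammer v (j-k))"
    if "k \<le> j" for k
  proof -
    have "((-u) gchoose k) * ((-v) gchoose (j - k)) = ((-1)^k * (-1)^(j-k)) * pochhammer u k * pochhammer v (j-k) / (fact k * fact (j-k))"
      by (simp add: gbinomial_pochhammer)
    also have "((-1::complex)^k * (-1)^(j-k)) = (-1)^j" using that by (simp add: power_add[symmetric])
    finally show ?thesis using that by (simp add: binomial_fact field_simps)
  qed
  have "(-1)^j / fact j * (\<Sum>k\<le>j. of_nat (j choose k) * pochhammer u k * pochhammer v (j-k)) = (-u + -v) gchoose j"
    unfolding V[symmetric] atLeast0AtMost[symmetric] sum_distrib_left using t by (intro sum.cong) auto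
  also have "\<dots> = (-1)^j * pochhammer (u+v) j / fact j" by (simp add: gbinomial_pochhammer add.commute)
  finally have "(-1)^j / fact j * (\<Sum>k\<le>j. of_nat (j choose k) * pochhammer u k * pochhammer v (j-k)) = (-1)^j / fact j * pochhammer (u+v) j"
    by simp
  then show ?thesis by simp
qed

lemma coreV:
  assumes "j \<le> N" "e + A + of_nat N = 1 - x"
  shows "(-1)^j * (\<Sum>k\<le>j. of_nat (j choose k) * pochhammer e k * pochhammer A (N-k)) = pochhammer x j * pochhammer (A::complex) (N-j)"
proof -
  have s: "pochhammer A (N-k) = pochhammer A (N-j) * pochhammer (A + of_nat (N-j)) (j-k)" if "k \<le> j" for k
    using pochhammer_product'[of A "N-j" "j-k"] that assms(1) by (simp add: add.commute)
  have "(\<Sum>k\<le>j. of_nat (j choose k) * pochhammer e k * pochhammer A (N-k))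
     = pochhammer A (N-j) * (\<Sum>k\<le>j. of_nat (j choose k) * pochhammer e k * pochhammer (A + of_nat (N-j)) (j-k))"
    unfolding sum_distrib_left
  proof (intro sum.cong refl)
    fix k assume "k \<in> {..j}"
    then have kj: "k \<le> j" by simp
    show "of_nat (j choose k) * pochhammer e k * pochhammer A (N-k) = pochhammer A (N-j) * (of_nat (j choose k) * pochhammer e k * pochhammer (A + of_nat (N-j)) (j-k))"
      unfolding s[OF kj] by (simp only: mult_ac)
  qed
  also have "\<dots> = pochhammer A (N-j) * pochhammer (e + (A + of_nat (N-j))) j" by (simp only: vandR)
  also have "e + (A + of_nat (N-j)) = (- x) - of_nat j + 1"
  proof -
    have d: "of_nat (N-j) = (of_nat N - of_nat j :: complex)" using assms(1) by (simp add: of_nat_diff)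
    have "e + (A + of_nat (N-j)) = (e + A + of_nat N) - of_nat j" unfolding d by (simp only: add_diff_eq add.assoc)
    also have "\<dots> = (- x) - of_nat j + 1" unfolding assms(2) by simp
    finally show ?thesis .
  qed
  finally have "(\<Sum>k\<le>j. of_nat (j choose k) * pochhammer e k * pochhammer A (N-k)) = pochhammer A (N-j) * ((-1)^j * pochhammer x j)"
    by (simp add: pochhammer_minus')
  then have "(-1)^j * (\<Sum>k\<le>j. of_nat (j choose k) * pochhammer e k * pochhammer A (N-k)) = ((-1)^j * (-1)^j) * (pochhammer x j * pochhammer A (N-j))"
    by (simp only: mult_ac)
  also have "((-1::complex)^j * (-1)^j) = 1" by (simp add: power_mult_distrib[symmetric])
  finally show ?thesis by simp
qed

lemma elemC: "pochhammer (f::complex) m * pochhammer (f + of_nat m) n = pochhammer f n * pochhammer (f + of_nat n) m"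
  using pochhammer_product'[of f m n] pochhammer_product'[of f n m] by (simp add: add.commute)

lemma listC: "length fs = length ms \<Longrightarrow>
  poch_vec fs ms * prod_list (map (\<lambda>a. pochhammer a n) (map2 (\<lambda>fi mi. fi + of_nat mi) fs ms))
  = prod_list (map (\<lambda>a. pochhammer a n) fs) * poch_vec (map (\<lambda>f. f + of_nat n) fs) ms"
proof (induction fs ms rule: list_induct2)
  case Nil
  then show ?case by (simp add: poch_vec_def)
next
  case (Cons f fs m ms)
  have "poch_vec (f # fs) (m # ms) * prod_list (map (\<lambda>a. pochhammer a n) (map2 (\<lambda>fi mi. fi + of_nat mi) (f # fs) (m # ms)))
     = (pochhammer f m * pochhammer (f + of_nat m) n) * (poch_vec fs ms * prod_list (map (\<lambda>a. pochhammer a n) (map2 (\<lambda>fi mi. fi + of_nat mi) fs ms)))"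
    by (simp add: poch_vec_def mult_ac)
  also have "\<dots> = (pochhammer f n * pochhammer (f + of_nat n) m) * (prod_list (map (\<lambda>a. pochhammer a n) fs) * poch_vec (map (\<lambda>f. f + of_nat n) fs) ms)"
    by (simp only: elemC Cons.IH)
  finally show ?case by (simp add: poch_vec_def mult_ac)
qed

lemma listD: "length fs = length ms \<Longrightarrow>
  poch_vec (map (\<lambda>fi. fi - b) fs) ms * prod_list (map (\<lambda>a. pochhammer a n) (map (\<lambda>fi. 1 - fi + b) fs))
  = prod_list (map (\<lambda>a. pochhammer a n) (map2 (\<lambda>fi mi. 1 - fi + b - of_nat mi) fs ms)) * poch_vec (map (\<lambda>f. f + (- b - of_nat n)) fs) ms"
proof (induction fs ms rule: list_induct2)
  case Nil
  then show ?case by (simp add: poch_vec_def)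
next
  case (Cons f fs m ms)
  have "poch_vec (map (\<lambda>fi. fi - b) (f # fs)) (m # ms) * prod_list (map (\<lambda>a. pochhammer a n) (map (\<lambda>fi. 1 - fi + b) (f # fs)))
     = (pochhammer (f - b) m * pochhammer (1 - f + b) n) * (poch_vec (map (\<lambda>fi. fi - b) fs) ms * prod_list (map (\<lambda>a. pochhammer a n) (map (\<lambda>fi. 1 - fi + b) fs)))"
    by (simp add: poch_vec_def mult_ac)
  also have "\<dots> = (pochhammer (1 - f + b - of_nat m) n * pochhammer (f + (- b - of_nat n)) m) * (prod_list (map (\<lambda>a. pochhammer a n) (map2 (\<lambda>fi mi. 1 - fi + b - of_nat mi) fs ms)) * poch_vec (map (\<lambda>f. f + (- b - of_nat n)) fs) ms)"
    by (simp only: elemD Cons.IH)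
  finally show ?case by (simp add: poch_vec_def mult_ac)
qed

lemma prod_list_nz: "(\<And>i. i < length xs \<Longrightarrow> xs ! i \<noteq> 0) \<Longrightarrow> prod_list xs \<noteq> (0::complex)"
  by (metis in_set_conv_nth prod_list_zero_iff)

lemma Ceq:
  assumes len: "length fs = length ms"
    and nz0: "\<And>i n. i < length ms \<Longrightarrow> n \<le> k \<Longrightarrow> pochhammer (fs ! i) n \<noteq> 0"
  shows "poch_vec fs ms * C_coef fs ms k = (dif^^k) (\<lambda>y. poch_vec (map (\<lambda>f. f + y) fs) ms) 0 / fact k"
proof -
  define G where "G = (\<lambda>y. poch_vec (map (\<lambda>f. f + y) fs) ms)"
  define PA where "PA = (\<lambda>n. prod_list (map (\<lambda>a. pochhammer a n) (map2 (\<lambda>fi mi. fi + of_nat mi) fs ms)))"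
  define PB where "PB = (\<lambda>n. prod_list (map (\<lambda>a. pochhammer a n) fs))"
  have nz: "PB n \<noteq> 0" if "n \<le> k" for n
    unfolding PB_def by (rule prod_list_nz) (use nz0 that len in auto)
  have t: "poch_vec fs ms * (pochhammer (- of_nat k) n * PA n / (PB n * fact n)) = (-1)^n * of_nat (k choose n) * G (0 + of_nat n)"
    if "n \<le> k" for n
  proof -
    have l: "poch_vec fs ms * PA n = PB n * G (of_nat n)"
      unfolding PA_def PB_def G_def using listC[OF len] by simp
    have "poch_vec fs ms * (pochhammer (- of_nat k) n * PA n / (PB n * fact n))
       = (-1)^n * of_nat (k choose n) * (fact n / fact n) * ((poch_vec fs ms * PA n) / PB n)"
      by (simp add: negpoch)
    also have "\<dots> = (-1)^n * of_nat (k choose n) * G (0 + of_nat n)"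
      unfolding l using nz[OF that] by simp
    finally show ?thesis .
  qed
  have "poch_vec fs ms * C_coef fs ms k = (-1)^k / fact k * (\<Sum>n\<le>k. poch_vec fs ms * (pochhammer (- of_nat k) n * PA n / (PB n * fact n)))"
    unfolding C_coef_def hypF_term_def PA_def PB_def sum_distrib_left by (simp add: mult_ac)
  also have "\<dots> = (-1)^k / fact k * (\<Sum>n\<le>k. (-1)^n * of_nat (k choose n) * G (0 + of_nat n))"
    using t by simp
  also have "\<dots> = (\<Sum>n\<le>k. (-1)^(k+n) * of_nat (k choose n) * G (0 + of_nat n)) / fact k"
    unfolding sum_distrib_left sum_divide_distrib by (intro sum.cong) (auto simp: power_add)
  also have "\<dots> = (dif^^k) G 0 / fact k" by (simp only: lemA)
  finally show ?thesis unfolding G_def .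
qed

lemma Deq:
  assumes len: "length fs = length ms"
    and nz0: "\<And>i n. i < length ms \<Longrightarrow> n \<le> k \<Longrightarrow> pochhammer (1 - fs ! i + b - of_nat (ms ! i)) n \<noteq> 0"
  shows "D_coef b fs ms k = (dif^^k) (\<lambda>y. poch_vec (map (\<lambda>f. f + (- b - y)) fs) ms) 0 / fact k"
proof -
  define G where "G = (\<lambda>y. poch_vec (map (\<lambda>f. f + (- b - y)) fs) ms)"
  define pv where "pv = poch_vec (map (\<lambda>fi. fi - b) fs) ms"
  define PA where "PA = (\<lambda>n. prod_list (map (\<lambda>a. pochhammer a n) (map (\<lambda>fi. 1 - fi + b) fs)))"
  define PB where "PB = (\<lambda>n. prod_list (map (\<lambda>a. pochhammer a n) (map2 (\<lambda>fi mi. 1 - fi + b - of_nat mi) fs ms)))"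
  have nz: "PB n \<noteq> 0" if "n \<le> k" for n
    unfolding PB_def by (rule prod_list_nz) (use nz0 that len in auto)
  have t: "pv * (pochhammer (- of_nat k) n * PA n / (PB n * fact n)) = (-1)^n * of_nat (k choose n) * G (0 + of_nat n)"
    if "n \<le> k" for n
  proof -
    have l: "pv * PA n = PB n * G (of_nat n)"
      unfolding PA_def PB_def G_def pv_def using listD[OF len] by simp
    have "pv * (pochhammer (- of_nat k) n * PA n / (PB n * fact n))
       = (-1)^n * of_nat (k choose n) * (fact n / fact n) * ((pv * PA n) / PB n)"
      by (simp add: negpoch)
    also have "\<dots> = (-1)^n * of_nat (k choose n) * G (0 + of_nat n)"
      unfolding l using nz[OF that] by simp
    finally show ?thesis .
  qed
  have "D_coef b fs ms k = (-1)^k / fact k * (\<Sum>n\<le>k. pv * (pochhammer (- of_nat k) n * PA n / (PB n * fact n)))"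
    unfolding D_coef_def hypF_term_def PA_def PB_def pv_def sum_distrib_left by (simp add: mult_ac)
  also have "\<dots> = (-1)^k / fact k * (\<Sum>n\<le>k. (-1)^n * of_nat (k choose n) * G (0 + of_nat n))"
    using t by simp
  also have "\<dots> = (\<Sum>n\<le>k. (-1)^(k+n) * of_nat (k choose n) * G (0 + of_nat n)) / fact k"
    unfolding sum_distrib_left sum_divide_distrib by (intro sum.cong) (auto simp: power_add)
  also have "\<dots> = (dif^^k) G 0 / fact k" by (simp only: lemA)
  finally show ?thesis unfolding G_def .
qed

theorem lemma2:
  fixes b c :: complex and fs :: "complex list" and ms :: "nat list"
  assumes "length fs = length ms" and "length ms \<ge> 1"
    and "pochhammer (c - b - of_nat (sum_list ms)) (sum_list ms) \<noteq> 0"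
    and "\<And>i n. i < length ms \<Longrightarrow> n \<le> sum_list ms \<Longrightarrow>
           pochhammer (1 - fs ! i + b - of_nat (ms ! i)) n \<noteq> 0"
    and "\<And>i n. i < length ms \<Longrightarrow> n \<le> sum_list ms \<Longrightarrow> pochhammer (fs ! i) n \<noteq> 0"
  shows "\<forall>x. P_poly b c fs ms x = poch_vec fs ms * Q_poly b c fs ms x"
proof
  fix x
  define N where "N = sum_list ms"
  define G where "G = (\<lambda>y. poch_vec (map (\<lambda>f. f + y) fs) ms)"
  obtain g where g: "\<forall>y. G y = (\<Sum>j\<le>N. g j * ff j y)"
    using inspan_G[OF assms(1)] unfolding inspan_def G_def N_def by blast
  have cC: "poch_vec fs ms * C_coef fs ms k = g k" if "k \<le> N" for k
  proof -
    have "poch_vec fs ms * C_coef fs ms k = (dif^^k) G 0 / fact k"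
      unfolding G_def by (rule Ceq[OF assms(1)]) (use assms(5) that N_def in auto)
    also have "\<dots> = g k" using coefC[OF g that] by simp
    finally show ?thesis .
  qed
  have cD: "D_coef b fs ms k = (\<Sum>j\<le>N. g j * (-1)^j *
     (if k \<le> j then of_nat (j choose k) * pochhammer (b + of_nat k) (j-k) else 0))" if "k \<le> N" for k
  proof -
    have "D_coef b fs ms k = (dif^^k) (\<lambda>y. G (- b - y)) 0 / fact k"
      unfolding G_def by (rule Deq[OF assms(1)]) (use assms(4) that N_def in auto)
    also have "\<dots> = (\<Sum>j\<le>N. g j * (-1)^j *
     (if k \<le> j then fact j / fact (j-k) * pochhammer (b + of_nat k) (j-k) else 0)) / fact k"
      using coefD[OF g] by simp
    also have "\<dots> = (\<Sum>j\<le>N. g j * (-1)^j *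
     (if k \<le> j then of_nat (j choose k) * pochhammer (b + of_nat k) (j-k) else 0))"
      unfolding sum_divide_distrib by (intro sum.cong) (auto simp: binomial_fact)
    finally show ?thesis .
  qed
  define A where "A = c - b - of_nat N - x"
  define e where "e = 1 - c + b"
  have eA: "e + A + of_nat N = 1 - x" unfolding e_def A_def by simp
  have "(\<Sum>k\<le>N. pochhammer b k * pochhammer e k * D_coef b fs ms k * pochhammer A (N - k))
      = (\<Sum>k\<le>N. \<Sum>j\<le>N. g j * (-1)^j * (if k \<le> j then pochhammer b j * (of_nat (j choose k) * pochhammer e k * pochhammer A (N - k)) else 0))"
  proof (intro sum.cong refl)
    fix k assume k: "k \<in> {..N}"
    have pp: "pochhammer b k * pochhammer (b + of_nat k) (j-k) = pochhammer b j" if "k \<le> j" for j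
      using pochhammer_product[OF that, of b] by simp
    show "pochhammer b k * pochhammer e k * D_coef b fs ms k * pochhammer A (N - k) =
        (\<Sum>j\<le>N. g j * (-1)^j * (if k \<le> j then pochhammer b j * (of_nat (j choose k) * pochhammer e k * pochhammer A (N - k)) else 0))"
      unfolding cD[OF k[simplified]] sum_distrib_left sum_distrib_right
    proof (intro sum.cong refl)
      fix j assume "j \<in> {..N}"
      show "pochhammer b k * pochhammer e k * (g j * (- 1) ^ j * (if k \<le> j then of_nat (j choose k) * pochhammer (b + of_nat k) (j - k) else 0)) * pochhammer A (N - k)
         = g j * (- 1) ^ j * (if k \<le> j then pochhammer b j * (of_nat (j choose k) * pochhammer e k * pochhammer A (N - k)) else 0)"
      proof (cases "k \<le> j")
        case True
        show ?thesis using True by (simp add: pp[OF True, symmetric] mult_ac)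
      qed simp
    qed
  qed
  also have "\<dots> = (\<Sum>j\<le>N. g j * (-1)^j * (\<Sum>k\<le>N. if k \<le> j then pochhammer b j * (of_nat (j choose k) * pochhammer e k * pochhammer A (N - k)) else 0))"
    by (subst sum.swap) (simp add: sum_distrib_left)
  also have "\<dots> = (\<Sum>j\<le>N. g j * pochhammer b j * ((-1)^j * (\<Sum>k\<le>j. of_nat (j choose k) * pochhammer e k * pochhammer A (N - k))))"
  proof (intro sum.cong refl)
    fix j assume j: "j \<in> {..N}"
    have "(\<Sum>k\<le>N. if k \<le> j then pochhammer b j * (of_nat (j choose k) * pochhammer e k * pochhammer A (N - k)) else 0)
      = (\<Sum>k\<in>{k\<in>{..N}. k \<le> j}. pochhammer b j * (of_nat (j choose k) * pochhammer e k * pochhammer A (N - k)))"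
      by (rule sum.inter_filter[symmetric]) simp
    also have "{k\<in>{..N}. k \<le> j} = {..j}" using j by auto
    finally show "g j * (-1)^j * (\<Sum>k\<le>N. if k \<le> j then pochhammer b j * (of_nat (j choose k) * pochhammer e k * pochhammer A (N - k)) else 0)
      = g j * pochhammer b j * ((-1)^j * (\<Sum>k\<le>j. of_nat (j choose k) * pochhammer e k * pochhammer A (N - k)))"
      by (simp add: sum_distrib_left mult_ac)
  qed
  also have "\<dots> = (\<Sum>j\<le>N. pochhammer b j * (poch_vec fs ms * C_coef fs ms j) * pochhammer x j * pochhammer A (N - j))"
  proof (intro sum.cong refl)
    fix j assume "j \<in> {..N}"
    then have j: "j \<le> N" by simp
    show "g j * pochhammer b j * ((-1)^j * (\<Sum>k\<le>j. of_nat (j choose k) * pochhammer e k * pochhammer A (N - k)))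
      = pochhammer b j * (poch_vec fs ms * C_coef fs ms j) * pochhammer x j * pochhammer A (N - j)"
      unfolding coreV[OF j eA] cC[OF j] by (simp only: mult_ac)
  qed
  finally have S: "(\<Sum>k\<le>N. pochhammer b k * pochhammer e k * D_coef b fs ms k * pochhammer A (N - k))
     = (\<Sum>j\<le>N. pochhammer b j * (poch_vec fs ms * C_coef fs ms j) * pochhammer x j * pochhammer A (N - j))" .
  show "P_poly b c fs ms x = poch_vec fs ms * Q_poly b c fs ms x"
    unfolding P_poly_def Q_poly_def Let_def N_def[symmetric] A_def[symmetric] e_def[symmetric] S
    by (simp add: sum_distrib_left mult_ac)
qed

end
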